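(* There is a constant $C$ such that every path restricted ordered bipartite graph $G=(U,V,E)$ with $n=|U|+|V|\ge 2$ vertices satisfies $|E|\le n\log_2 n + Cn$. Moreover, this bound is tight up to the constant factor: there is a constant $c>0$ such that for every $n\ge 2$ there exists a path restricted ordered bipartite graph on $n$ vertices with at least $c\,n\log n$ edges.
   Context: An ordered bipartite graph is a triple $G=(U,V,E)$ where $U$ and $V$ are disjoint finite sets, each equipped with a total order (both denoted $<$), and $E\subseteq U\times V$ is a set of edges. A forward path in $G$ is a sequence $w_0,w_1,\dots,w_m$ ($m\ge1$) of distinct vertices alternating between $U$ and $V$, with $\{w_{k-1},w_k\}\in E$ for all $k$, such that the vertices of the sequence lying in $U$ appear in strictly increasing order along the sequence and the vertices lying in $V$ also appear in strictly increasing order along the sequence (a path whose $U$-vertices and $V$-vertices are both strictly decreasing is the same path read in reverse). The range of the forward path is the pair of intervals $\langle u_a,u_b\rangle=\{u\in U: u_a\le u\le u_b\}$ and $\langle v_c,v_d\rangle=\{v\in V: v_c\le v\le v_d\}$, where $u_a,u_b$ (resp. $v_c,v_d$) are the smallest and largest $U$-vertices (resp. $V$-vertices) on the path. A back edge to such a forward path is an edge $\{w_0,x\}\in E$ where $x$ lies in the part ($U$ or $V$) not containing $w_0$ and $w_1 < x \le M$, with $M$ the largest vertex of the path in that part (so $x$ lies in the range of the path). $G$ has the path restricted property, and is called a path restricted ordered bipartite graph (PRBG), if no forward path in $G$ has a back edge in $E$. *)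

theory Defs
  imports Complex_Main
begin

text \<open>An ordered bipartite graph (U,V,E): U and V are finite sets of naturals
 (every finite total order is isomorphic to one), ordered by the natural order.
 Vertices are tagged: Inl u for u in U, Inr v for v in V, so U and V are disjoint.\<close>

type_synonym vtx = "nat + nat"

fun adj :: "(nat \<times> nat) set \<Rightarrow> vtx \<Rightarrow> vtx \<Rightarrow> bool" where
  "adj E (Inl u) (Inr v) = ((u, v) \<in> E)"
| "adj E (Inr v) (Inl u) = ((u, v) \<in> E)"
| "adj E _ _ = False"

fun lefts :: "vtx list \<Rightarrow> nat list" where
  "lefts [] = []"
| "lefts (Inl u # ws) = u # lefts ws"
| "lefts (Inr v # ws) = lefts ws"

fun rights :: "vtx list \<Rightarrow> nat list" where
  "rights [] = []"
| "rights (Inl u # ws) = rights ws"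
| "rights (Inr v # ws) = v # rights ws"

definition vertices :: "nat set \<Rightarrow> nat set \<Rightarrow> vtx set" where
  "vertices U V = Inl ` U \<union> Inr ` V"

text \<open>Forward path w_0,...,w_m (m \<ge> 1): distinct vertices, consecutive ones adjacent
 (which forces alternation between U and V), U-vertices strictly increasing along
 the sequence, V-vertices strictly increasing along the sequence.\<close>
definition forward_path :: "nat set \<Rightarrow> nat set \<Rightarrow> (nat \<times> nat) set \<Rightarrow> vtx list \<Rightarrow> bool" where
  "forward_path U V E ws \<longleftrightarrow>
     length ws \<ge> 2 \<and> distinct ws \<and> set ws \<subseteq> vertices U V \<and>
     (\<forall>k. 0 < k \<and> k < length ws \<longrightarrow> adj E (ws ! (k - 1)) (ws ! k)) \<and>
     sorted_wrt (<) (lefts ws) \<and> sorted_wrt (<) (rights ws)"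

definition has_back_edge :: "(nat \<times> nat) set \<Rightarrow> vtx list \<Rightarrow> bool" where
  "has_back_edge E ws \<longleftrightarrow>
     (case (ws ! 0, ws ! 1) of
        (Inl u0, Inr v1) \<Rightarrow> (\<exists>v. (u0, v) \<in> E \<and> v1 < v \<and> v \<le> Max (set (rights ws)))
      | (Inr v0, Inl u1) \<Rightarrow> (\<exists>u. (u, v0) \<in> E \<and> u1 < u \<and> u \<le> Max (set (lefts ws)))
      | _ \<Rightarrow> False)"

definition prbg :: "nat set \<Rightarrow> nat set \<Rightarrow> (nat \<times> nat) set \<Rightarrow> bool" where
  "prbg U V E \<longleftrightarrow> finite U \<and> finite V \<and> E \<subseteq> U \<times> V \<and>
     \<not> (\<exists>ws. forward_path U V E ws \<and> has_back_edge E ws)"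

end

theory Submission
  imports Defs "HOL-Library.Discrete_Functions"
begin

lemma set_lefts: "b \<in> set (lefts ws) \<longleftrightarrow> Inl b \<in> set ws"
  by (induction ws rule: lefts.induct) auto

lemma set_rights: "b \<in> set (rights ws) \<longleftrightarrow> Inr b \<in> set ws"
  by (induction ws rule: rights.induct) auto

lemma A3:
  assumes "prbg U V E" "r0 < r'" "(r0,c) \<in> E" "(r',c) \<in> E" "(r',v) \<in> E" "c < v"
    "(r0,x) \<in> E" "c < x" "x \<le> v"
  shows False
proof -
  let ?ws = "[Inl r0, Inr c, Inl r', Inr v]"
  have sub: "E \<subseteq> U \<times> V" using assms(1) by (simp add: prbg_def)
  have fp: "forward_path U V E ?ws"
    unfolding forward_path_def
  proof (intro conjI)
    show "set ?ws \<subseteq> vertices U V" using sub assms(3,5) by (auto simp: vertices_def)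
    show "\<forall>k. 0 < k \<and> k < length ?ws \<longrightarrow> adj E (?ws ! (k - 1)) (?ws ! k)"
    proof (intro allI impI)
      fix k assume "0 < k \<and> k < length ?ws"
      then have "k = 1 \<or> k = 2 \<or> k = 3" by auto
      then show "adj E (?ws ! (k - 1)) (?ws ! k)" using assms by auto
    qed
  qed (use assms in auto)
  have "has_back_edge E ?ws"
    unfolding has_back_edge_def using assms by (auto simp: max_def)
  then show False using fp assms(1) unfolding prbg_def by blast
qed

lemma upper_nat:
  assumes pr: "prbg U V E"
  shows "card E \<le> card U + (floor_log (card U + card V) + 1) * (card U + card V)"
proof -
  define n where "n = card U + card V"
  have finU: "finite U" and finV: "finite V" and sub: "E \<subseteq> U \<times> V"
    using pr by (auto simp: prbg_def)
  have finE: "finite E" using sub finU finV by (meson finite_SigmaI finite_subset)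
  have EV: "\<And>r c. (r,c) \<in> E \<Longrightarrow> c \<in> V" and EU: "\<And>r c. (r,c) \<in> E \<Longrightarrow> r \<in> U"
    using sub by auto
  define rk where "rk c = card {x\<in>V. x < c}" for c
  have rk_less: "rk c < rk c'" if "c \<in> V" "c < c'" for c c'
  proof -
    have "{x\<in>V. x < c} \<subset> {x\<in>V. x < c'}" using that by auto
    then show ?thesis unfolding rk_def by (intro psubset_card_mono) (use finV in auto)
  qed
  have rk_le: "rk c \<le> rk c'" if "c \<le> c'" for c c'
    unfolding rk_def by (rule card_mono) (use finV that in auto)
  have rk_bound: "rk c < card V" if "c \<in> V" for c
  proof -
    have "{x\<in>V. x < c} \<subset> V" using that by auto
    then show ?thesis unfolding rk_def by (intro psubset_card_mono finV)
  qed
  define S where "S r c = {c'. (r,c') \<in> E \<and> c < c'}" for r c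
  define P where "P = {e \<in> E. S (fst e) (snd e) \<noteq> {}}"
  define nx where "nx r c = Min (S r c)" for r c
  have finS: "finite (S r c)" for r c
    by (rule finite_subset[of _ "snd ` E"]) (force simp: S_def, rule finite_imageI[OF finE])
  have nx: "(r, nx r c) \<in> E \<and> c < nx r c \<and> (\<forall>c'. (r,c') \<in> E \<and> c < c' \<longrightarrow> nx r c \<le> c')"
    if "(r,c) \<in> P" for r c
  proof -
    have ne: "S r c \<noteq> {}" using that by (simp add: P_def)
    have "nx r c \<in> S r c" unfolding nx_def using Min_in[OF finS ne] .
    moreover have "\<forall>c'\<in>S r c. nx r c \<le> c'" unfolding nx_def using Min_le[OF finS] by blast
    ultimately show ?thesis by (auto simp: S_def)
  qed
  define g where "g e = rk (nx (fst e) (snd e)) - rk (snd e)" for e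
  define lev where "lev e = floor_log (g e)" for e
  have gprop: "rk (nx r c) = rk c + g (r,c) \<and> 1 \<le> g (r,c) \<and> g (r,c) < n
        \<and> 2 ^ lev (r,c) \<le> g (r,c) \<and> g (r,c) < 2 * 2 ^ lev (r,c)" if "(r,c) \<in> P" for r c
  proof -
    have E: "(r,c) \<in> E" using that by (simp add: P_def)
    from nx[OF that] have a: "(r, nx r c) \<in> E" and b: "c < nx r c" by auto
    have lt: "rk c < rk (nx r c)" using rk_less[OF EV[OF E] b] .
    have bd: "rk (nx r c) < card V" using rk_bound[OF EV[OF a]] .
    have g1: "g (r,c) \<ge> 1" using lt by (simp add: g_def)
    have "g (r,c) < n" using bd lt by (simp add: g_def n_def)
    moreover have "2 ^ lev (r,c) \<le> g (r,c)" unfolding lev_def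
      by (rule floor_log_exp2_le) (use g1 in auto)
    moreover have "g (r,c) < 2 * 2 ^ lev (r,c)" unfolding lev_def by (rule floor_log_exp2_gt)
    ultimately show ?thesis using lt g1 by (simp add: g_def)
  qed
  have inj1: "inj_on fst (E - P)"
  proof (rule inj_onI)
    fix x y assume x: "x \<in> E - P" and y: "y \<in> E - P" and eq: "fst x = fst y"
    obtain r c where xr: "x = (r,c)" by fastforce
    obtain r' c' where yr: "y = (r',c')" by fastforce
    have "r = r'" using eq xr yr by simp
    show "x = y"
    proof (rule ccontr)
      assume "x \<noteq> y"
      then have "c \<noteq> c'" using xr yr \<open>r = r'\<close> by simp
      then show False
      proof (cases "c < c'")
        case True
        then have "c' \<in> S r c" using y yr \<open>r = r'\<close> by (auto simp: S_def)
        then have "x \<in> P" using x xr by (auto simp: P_def)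
        then show False using x by simp
      next
        case False
        then have "c' < c" using \<open>c \<noteq> c'\<close> by simp
        then have "c \<in> S r' c'" using x xr \<open>r = r'\<close> by (auto simp: S_def)
        then have "y \<in> P" using y yr by (auto simp: P_def)
        then show False using y by simp
      qed
    qed
  qed
  have "card (E - P) \<le> card U"
    using card_inj_on_le[OF inj1 _ finU] sub by force
  moreover have "card E \<le> card P + card (E - P)"
  proof -
    have "E = P \<union> (E - P)" by (auto simp: P_def)
    then have "card E = card (P \<union> (E - P))" by simp
    also have "\<dots> \<le> card P + card (E - P)" by (rule card_Un_le)
    finally show ?thesis .
  qed
  ultimately have c1: "card E \<le> card U + card P" by simp
  define Pk where "Pk k = {e \<in> P. lev e = k}" for k
  have levelbound: "card (Pk k) \<le> n" for k
  proof -
    define T where "T = {e \<in> Pk k. \<forall>r0 < fst e. (r0, snd e) \<notin> Pk k}"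
    have injT: "inj_on snd T"
    proof (rule inj_onI)
      fix x y assume x: "x \<in> T" and y: "y \<in> T" and eq: "snd x = snd y"
      obtain r c where xr: "x = (r,c)" by fastforce
      obtain r' c' where yr: "y = (r',c')" by fastforce
      have cc: "c = c'" using eq xr yr by simp
      show "x = y"
      proof (rule ccontr)
        assume "x \<noteq> y"
        then have "r \<noteq> r'" using xr yr cc by simp
        then show False
        proof (cases "r < r'")
          case True
          then show False using x y xr yr cc by (auto simp: T_def)
        next
          case False
          then have "r' < r" using \<open>r \<noteq> r'\<close> by simp
          then show False using x y xr yr cc by (auto simp: T_def)
        qed
      qed
    qed
    have key: False if a: "(r',c) \<in> Pk k - T" and b: "(r',d) \<in> Pk k - T" and cd: "c < d" for r' c d
    proof -
      obtain r0 where r0: "r0 < r'" "(r0, c) \<in> Pk k" using a by (auto simp: T_def)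
      have P0: "(r0,c) \<in> P" using r0 by (simp add: Pk_def)
      have Pc: "(r',c) \<in> P" and Pd: "(r',d) \<in> P" using a b by (auto simp: Pk_def)
      have lv0: "lev (r0,c) = k" and lvc: "lev (r',c) = k" and lvd: "lev (r',d) = k"
        using r0 a b by (auto simp: Pk_def)
      define c0 where "c0 = nx r0 c"
      define d' where "d' = nx r' d"
      have c0E: "(r0,c0) \<in> E" and cc0: "c < c0" using nx[OF P0] by (auto simp: c0_def)
      have d'E: "(r',d') \<in> E" and dd': "d < d'" using nx[OF Pd] by (auto simp: d'_def)
      have r0cE: "(r0,c) \<in> E" and r'cE: "(r',c) \<in> E" and r'dE: "(r',d) \<in> E"
        using P0 Pc Pd by (auto simp: P_def)
      have "d' < c0"
      proof (rule ccontr)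
        assume "\<not> d' < c0"
        then have "c0 \<le> d'" by simp
        show False
          by (rule A3[OF pr r0(1) r0cE r'cE d'E _ c0E cc0 \<open>c0 \<le> d'\<close>]) (use cd dd' in simp)
      qed
      then have r1: "rk d' < rk c0" using rk_less[OF EV[OF d'E]] by simp
      have "nx r' c \<le> d" using nx[OF Pc] r'dE cd by auto
      then have r2: "rk (nx r' c) \<le> rk d" by (rule rk_le)
      have g0: "rk c0 = rk c + g (r0,c)" "g (r0,c) < 2 * 2^k"
        using gprop[OF P0] lv0 by (auto simp: c0_def)
      have gc: "rk (nx r' c) = rk c + g (r',c)" "2^k \<le> g (r',c)"
        using gprop[OF Pc] lvc by auto
      have gd: "rk d' = rk d + g (r',d)" "2^k \<le> g (r',d)"
        using gprop[OF Pd] lvd by (auto simp: d'_def)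
      show False using r1 r2 g0 gc gd by linarith
    qed
    have injN: "inj_on fst (Pk k - T)"
    proof (rule inj_onI)
      fix x y assume x: "x \<in> Pk k - T" and y: "y \<in> Pk k - T" and eq: "fst x = fst y"
      obtain r c where xr: "x = (r,c)" by fastforce
      obtain r' c' where yr: "y = (r',c')" by fastforce
      have rr: "r = r'" using eq xr yr by simp
      show "x = y"
      proof (rule ccontr)
        assume "x \<noteq> y"
        then have "c \<noteq> c'" using xr yr rr by simp
        then show False
        proof (cases "c < c'")
          case True
          then show False using key[of r c c'] x y xr yr rr by simp
        next
          case False
          then have "c' < c" using \<open>c \<noteq> c'\<close> by simp
          then show False using key[of r c' c] x y xr yr rr by simp
        qed
      qed
    qed
    have PkE: "Pk k \<subseteq> E" by (auto simp: Pk_def P_def)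
    have "card T \<le> card V"
      by (rule card_inj_on_le[OF injT _ finV]) (use PkE sub in \<open>force simp: T_def\<close>)
    moreover have "card (Pk k - T) \<le> card U"
      by (rule card_inj_on_le[OF injN _ finU]) (use PkE sub in force)
    moreover have "card (Pk k) \<le> card T + card (Pk k - T)"
    proof -
      have "Pk k = T \<union> (Pk k - T)" by (auto simp: T_def)
      then have "card (Pk k) = card (T \<union> (Pk k - T))" by simp
      also have "\<dots> \<le> card T + card (Pk k - T)" by (rule card_Un_le)
      finally show ?thesis .
    qed
    ultimately show ?thesis by (simp add: n_def)
  qed
  have PU: "P \<subseteq> (\<Union>k\<in>{..floor_log n}. Pk k)"
  proof
    fix e assume e: "e \<in> P"
    obtain r c where er: "e = (r,c)" by fastforce
    have "g e < n" using gprop[of r c] e er by simp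
    then have "lev e \<le> floor_log n" unfolding lev_def by (intro floor_log_le_iff) simp
    then show "e \<in> (\<Union>k\<in>{..floor_log n}. Pk k)" using e by (auto simp: Pk_def)
  qed
  have "card P \<le> card (\<Union>k\<in>{..floor_log n}. Pk k)"
    by (rule card_mono[OF _ PU]) (auto simp: Pk_def P_def intro: finite_subset[OF _ finE])
  also have "\<dots> \<le> (\<Sum>k\<in>{..floor_log n}. card (Pk k))" by (rule card_UN_le) simp
  also have "\<dots> \<le> (\<Sum>k\<in>{..floor_log n}. n)" by (rule sum_mono) (rule levelbound)
  also have "\<dots> = (floor_log n + 1) * n" by simp
  finally have "card P \<le> (floor_log n + 1) * n" .
  then show ?thesis using c1 by (simp add: n_def)
qed

lemma upper_real:
  assumes pr: "prbg U V E" and n2: "card U + card V \<ge> 2"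
  shows "real (card E) \<le> real (card U + card V) * log 2 (real (card U + card V))
                             + 2 * real (card U + card V)"
proof -
  define n where "n = card U + card V"
  have c: "card E \<le> card U + (floor_log n + 1) * n" using upper_nat[OF pr] by (simp add: n_def)
  have npos: "n > 0" using n2 unfolding n_def by linarith
  have "2 ^ floor_log n \<le> n" using floor_log_exp2_le[OF npos] .
  then have "real (2 ^ floor_log n) \<le> real n" by linarith
  then have "log 2 (real (2 ^ floor_log n)) \<le> log 2 (real n)"
    by (intro log_mono) auto
  then have fl: "real (floor_log n) \<le> log 2 (real n)"
    by (simp add: log_nat_power)
  have "real (card E) \<le> real (card U) + (real (floor_log n) + 1) * real n"
    using c by (metis of_nat_add of_nat_le_iff of_nat_mult of_nat_1)
  also have "\<dots> \<le> real n + (log 2 (real n) + 1) * real n"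
    using fl by (intro add_mono mult_right_mono) (auto simp: n_def)
  finally show ?thesis by (simp add: n_def algebra_simps)
qed

definition fpE :: "(nat \<times> nat) set \<Rightarrow> vtx list \<Rightarrow> bool" where
  "fpE E ws \<longleftrightarrow> length ws \<ge> 2 \<and> distinct ws \<and>
     (\<forall>k. 0 < k \<and> k < length ws \<longrightarrow> adj E (ws ! (k - 1)) (ws ! k)) \<and>
     sorted_wrt (<) (lefts ws) \<and> sorted_wrt (<) (rights ws)"

definition NB :: "(nat \<times> nat) set \<Rightarrow> bool" where
  "NB E \<longleftrightarrow> (\<forall>ws. fpE E ws \<longrightarrow> \<not> has_back_edge E ws)"

lemma prbgI:
  assumes "finite U" "finite V" "E \<subseteq> U \<times> V" "NB E"
  shows "prbg U V E"
  using assms unfolding prbg_def NB_def fpE_def forward_path_def by blast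

lemma lefts_map: "lefts (map (map_sum f g) ws) = map f (lefts ws)"
  by (induction ws rule: lefts.induct) auto

lemma rights_map: "rights (map (map_sum f g) ws) = map g (rights ws)"
  by (induction ws rule: rights.induct) auto

lemma sorted_pull:
  fixes f :: "nat \<Rightarrow> nat"
  assumes "strict_mono f" "sorted_wrt (<) (map f xs)"
  shows "sorted_wrt (<) xs"
proof -
  have m: "\<And>x y. f x < f y \<Longrightarrow> x < y" using assms(1) by (simp add: strict_mono_less)
  show ?thesis using assms(2) unfolding sorted_wrt_map
    by (rule sorted_wrt_mono_rel[rotated]) (rule m)
qed

lemma adj_pull:
  fixes f g :: "nat \<Rightarrow> nat"
  assumes "inj f" "inj g" "adj ((\<lambda>(u,v). (f u, g v)) ` E) (map_sum f g a) (map_sum f g b)"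
  shows "adj E a b"
  using assms by (cases a; cases b) (auto simp: inj_eq)

lemma pullback:
  fixes f g :: "nat \<Rightarrow> nat" and E :: "(nat \<times> nat) set"
  assumes f: "strict_mono f" and g: "strict_mono g"
    and fp: "fpE ((\<lambda>(u,v). (f u, g v)) ` E) ws"
    and hb: "has_back_edge ((\<lambda>(u,v). (f u, g v)) ` E) ws"
    and rng: "set ws \<subseteq> range (map_sum f g)"
  shows "\<not> NB E"
proof -
  let ?E2 = "(\<lambda>(u,v). (f u, g v)) ` E"
  let ?h = "map_sum f g"
  have injf: "inj f" and injg: "inj g" using f g strict_mono_imp_inj_on by blast+
  have fl: "f a < f b \<longleftrightarrow> a < b" "f a \<le> f b \<longleftrightarrow> a \<le> b" for a b
    using f by (simp_all add: strict_mono_less strict_mono_less_eq)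
  have gl: "g a < g b \<longleftrightarrow> a < b" "g a \<le> g b \<longleftrightarrow> a \<le> b" for a b
    using g by (simp_all add: strict_mono_less strict_mono_less_eq)
  have "\<exists>xs. ws = map ?h xs" unfolding ex_map_conv using rng by blast
  then obtain ws' where ws: "ws = map ?h ws'" by blast
  have len: "length ws' \<ge> 2" using fp ws by (simp add: fpE_def)
  have fp': "fpE E ws'"
    unfolding fpE_def
  proof (intro conjI)
    show "2 \<le> length ws'" by (rule len)
    show "distinct ws'" using fp ws by (simp add: fpE_def distinct_map)
    show "\<forall>k. 0 < k \<and> k < length ws' \<longrightarrow> adj E (ws' ! (k - 1)) (ws' ! k)"
    proof (intro allI impI)
      fix k assume k: "0 < k \<and> k < length ws'"
      then have "adj ?E2 (ws ! (k - 1)) (ws ! k)" using fp ws by (simp add: fpE_def)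
      moreover have "ws ! (k - 1) = ?h (ws' ! (k - 1))" "ws ! k = ?h (ws' ! k)" using k ws by auto
      ultimately have "adj ?E2 (?h (ws' ! (k - 1))) (?h (ws' ! k))" by simp
      then show "adj E (ws' ! (k - 1)) (ws' ! k)" by (rule adj_pull[OF injf injg])
    qed
    have "sorted_wrt (<) (map f (lefts ws'))" using fp ws by (simp add: fpE_def lefts_map)
    then show "sorted_wrt (<) (lefts ws')" by (rule sorted_pull[OF f])
    have "sorted_wrt (<) (map g (rights ws'))" using fp ws by (simp add: fpE_def rights_map)
    then show "sorted_wrt (<) (rights ws')" by (rule sorted_pull[OF g])
  qed
  have l01: "0 < length ws'" "1 < length ws'" using len by auto
  have w0: "ws ! 0 = ?h (ws' ! 0)" and w1: "ws ! 1 = ?h (ws' ! 1)"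
    unfolding ws by (simp_all only: nth_map l01)
  have in1: "ws' ! 1 \<in> set ws'" using len by simp
  have hb': "has_back_edge E ws'"
  proof (cases "ws' ! 0"; cases "ws' ! 1")
    fix u0 v1 assume a: "ws' ! 0 = Inl u0" and b: "ws' ! 1 = Inr v1"
    have "v1 \<in> set (rights ws')" using in1 b by (simp add: set_rights)
    then have ne: "set (rights ws') \<noteq> {}" by (metis empty_iff)
    have M: "Max (set (rights ws)) = g (Max (set (rights ws')))"
      using ws ne by (simp add: rights_map mono_Max_commute[OF strict_mono_mono[OF g]])
    have "\<exists>x. (f u0, x) \<in> ?E2 \<and> g v1 < x \<and> x \<le> Max (set (rights ws))"
      using hb a b w0 w1 by (simp add: has_back_edge_def)
    then obtain x where x: "(f u0, x) \<in> ?E2" "g v1 < x" "x \<le> Max (set (rights ws))"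
      by blast
    then obtain p where "p \<in> E" "(f u0, x) = (\<lambda>(u,v). (f u, g v)) p" by blast
    then obtain u' x' where "(u',x') \<in> E" "f u' = f u0" "g x' = x" by (cases p) auto
    then have "(u0,x') \<in> E" using injf by (simp add: inj_eq)
    moreover have "v1 < x'" using x(2) \<open>g x' = x\<close> gl by metis
    moreover have "x' \<le> Max (set (rights ws'))" using x(3) M \<open>g x' = x\<close> gl by metis
    ultimately show ?thesis using a b by (auto simp: has_back_edge_def)
  next
    fix v0 u1 assume a: "ws' ! 0 = Inr v0" and b: "ws' ! 1 = Inl u1"
    have "u1 \<in> set (lefts ws')" using in1 b by (simp add: set_lefts)
    then have ne: "set (lefts ws') \<noteq> {}" by (metis empty_iff)
    have M: "Max (set (lefts ws)) = f (Max (set (lefts ws')))"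
      using ws ne by (simp add: lefts_map mono_Max_commute[OF strict_mono_mono[OF f]])
    have "\<exists>x. (x, g v0) \<in> ?E2 \<and> f u1 < x \<and> x \<le> Max (set (lefts ws))"
      using hb a b w0 w1 by (simp add: has_back_edge_def)
    then obtain x where x: "(x, g v0) \<in> ?E2" "f u1 < x" "x \<le> Max (set (lefts ws))"
      by blast
    then obtain p where "p \<in> E" "(x, g v0) = (\<lambda>(u,v). (f u, g v)) p" by blast
    then obtain x' v' where "(x',v') \<in> E" "g v' = g v0" "f x' = x" by (cases p) auto
    then have "(x',v0) \<in> E" using injg by (simp add: inj_eq)
    moreover have "u1 < x'" using x(2) \<open>f x' = x\<close> fl by metis
    moreover have "x' \<le> Max (set (lefts ws'))" using x(3) M \<open>f x' = x\<close> fl by metis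
    ultimately show ?thesis using a b by (auto simp: has_back_edge_def)
  next
    fix u0 u1 assume "ws' ! 0 = Inl u0" "ws' ! 1 = Inl u1"
    then show ?thesis using hb w0 w1 by (simp add: has_back_edge_def)
  next
    fix u0 u1 assume "ws' ! 0 = Inr u0" "ws' ! 1 = Inr u1"
    then show ?thesis using hb w0 w1 by (simp add: has_back_edge_def)
  qed
  show ?thesis using fp' hb' unfolding NB_def by blast
qed

lemma lefts_order:
  "sorted_wrt (<) (lefts ws) \<Longrightarrow> i < j \<Longrightarrow> j < length ws \<Longrightarrow> ws ! i = Inl a \<Longrightarrow> ws ! j = Inl b \<Longrightarrow> a < b"
proof (induction ws arbitrary: i j)
  case Nil then show ?case by simp
next
  case (Cons w ws)
  show ?case
  proof (cases i)
    case 0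
    then have w: "w = Inl a" using Cons by simp
    obtain j' where j': "j = Suc j'" using Cons 0 by (cases j) auto
    have jl: "j' < length ws" and wj: "ws ! j' = Inl b" using Cons.prems j' by auto
    have "Inl b \<in> set ws" using nth_mem[OF jl] wj by simp
    then have "b \<in> set (lefts ws)" by (simp add: set_lefts)
    then show ?thesis using Cons.prems(1) w by simp
  next
    case (Suc i')
    obtain j' where j': "j = Suc j'" using Cons Suc by (cases j) auto
    have s: "sorted_wrt (<) (lefts ws)" using Cons.prems(1) by (cases w) auto
    show ?thesis by (rule Cons.IH[OF s, of i' j']) (use Cons.prems Suc j' in auto)
  qed
qed

lemma rights_order:
  "sorted_wrt (<) (rights ws) \<Longrightarrow> i < j \<Longrightarrow> j < length ws \<Longrightarrow> ws ! i = Inr a \<Longrightarrow> ws ! j = Inr b \<Longrightarrow> a < b"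
proof (induction ws arbitrary: i j)
  case Nil then show ?case by simp
next
  case (Cons w ws)
  show ?case
  proof (cases i)
    case 0
    then have w: "w = Inr a" using Cons by simp
    obtain j' where j': "j = Suc j'" using Cons 0 by (cases j) auto
    have jl: "j' < length ws" and wj: "ws ! j' = Inr b" using Cons.prems j' by auto
    have "Inr b \<in> set ws" using nth_mem[OF jl] wj by simp
    then have "b \<in> set (rights ws)" by (simp add: set_rights)
    then show ?thesis using Cons.prems(1) w by simp
  next
    case (Suc i')
    obtain j' where j': "j = Suc j'" using Cons Suc by (cases j) auto
    have s: "sorted_wrt (<) (rights ws)" using Cons.prems(1) by (cases w) auto
    show ?thesis by (rule Cons.IH[OF s, of i' j']) (use Cons.prems Suc j' in auto)
  qed
qed

lemma adj_cases:
  "adj E a b \<Longrightarrow> (\<exists>u v. a = Inl u \<and> b = Inr v \<and> (u,v) \<in> E) \<or> (\<exists>u v. a = Inr v \<and> b = Inl u \<and> (u,v) \<in> E)"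
  by (cases a; cases b) auto

lemma chain:
  fixes a i len :: nat
  assumes step: "\<And>j. 1 \<le> j \<Longrightarrow> j + 1 < len \<Longrightarrow> P (j - 1) \<Longrightarrow> P j \<Longrightarrow> P (j + 1)"
    and a: "P a" "P (a + 1)"
  shows "a \<le> i \<Longrightarrow> i < len \<Longrightarrow> P i"
proof (induction i rule: less_induct)
  case (less i)
  show ?case
  proof (cases "i \<le> a + 1")
    case True
    then have "i = a \<or> i = a + 1" using less.prems by auto
    then show ?thesis using a by auto
  next
    case False
    define j where "j = i - 1"
    have j: "i = j + 1" "j \<ge> a + 1" using False by (auto simp: j_def)
    have "P (j - 1)" by (rule less.IH) (use j less.prems in auto)
    moreover have "P j" by (rule less.IH) (use j less.prems in auto)
    ultimately show ?thesis using step[of j] j less.prems by auto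
  qed
qed

definition glue :: "nat \<Rightarrow> (nat \<times> nat) set \<Rightarrow> (nat \<times> nat) set" where
  "glue N E = (\<lambda>(u,v). (u, v + N)) ` E \<union> (\<lambda>(u,v). (u + N, v)) ` E \<union> (\<lambda>u. (u,u)) ` {..<N}"

lemma glue_cases:
  assumes "E \<subseteq> {..<N} \<times> {..<N}" "(u,v) \<in> glue N E"
  shows "(u < N \<and> N \<le> v \<and> (u, v - N) \<in> E) \<or> (N \<le> u \<and> v < N \<and> (u - N, v) \<in> E) \<or> (u = v \<and> u < N)"
  using assms unfolding glue_def by auto

lemma glue_A: "(u, v - N) \<in> E \<Longrightarrow> N \<le> v \<Longrightarrow> (u,v) \<in> glue N E"
  unfolding glue_def by (rule UnI1, rule UnI1) (force simp: image_iff)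

lemma glue_B: "(u - N, v) \<in> E \<Longrightarrow> N \<le> u \<Longrightarrow> (u,v) \<in> glue N E"
  unfolding glue_def by (rule UnI1, rule UnI2) (force simp: image_iff)

lemma NB_glue:
  assumes sub: "E \<subseteq> {..<N} \<times> {..<N}" and nb: "NB E"
  shows "NB (glue N E)"
  unfolding NB_def
proof (intro allI impI notI)
  fix ws assume fp: "fpE (glue N E) ws" and hb: "has_back_edge (glue N E) ws"
  let ?G = "glue N E"
  let ?A = "(\<lambda>(u,v). ((\<lambda>u. u) u, (\<lambda>v. v + N) v)) ` E"
  let ?B = "(\<lambda>(u,v). ((\<lambda>u. u + N) u, (\<lambda>v. v) v)) ` E"
  have len: "length ws \<ge> 2" and dist: "distinct ws"
    and adjs: "\<And>k. 0 < k \<Longrightarrow> k < length ws \<Longrightarrow> adj ?G (ws ! (k - 1)) (ws ! k)"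
    and sl: "sorted_wrt (<) (lefts ws)" and sr: "sorted_wrt (<) (rights ws)"
    using fp by (auto simp: fpE_def)
  have gc: "\<And>u v. (u,v) \<in> ?G \<Longrightarrow> (u < N \<and> N \<le> v \<and> (u, v - N) \<in> E) \<or> (N \<le> u \<and> v < N \<and> (u - N, v) \<in> E) \<or> (u = v \<and> u < N)"
    using glue_cases[OF sub] by blast
  define SA where "SA w = (case w of Inl u \<Rightarrow> u < N | Inr v \<Rightarrow> N \<le> v)" for w
  define SB where "SB w = (case w of Inl u \<Rightarrow> N \<le> u | Inr v \<Rightarrow> v < N)" for w
  have stepA: "SA (ws ! (j + 1))" if j: "1 \<le> j" "j + 1 < length ws" and a: "SA (ws ! (j - 1))" "SA (ws ! j)" for j
  proof -
    have e1: "adj ?G (ws ! (j - 1)) (ws ! j)" using adjs[of j] j by simp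
    have e2: "adj ?G (ws ! j) (ws ! (j + 1))" using adjs[of "j+1"] j by simp
    show ?thesis
    proof (cases "ws ! j")
      case (Inl u)
      then obtain v where v: "ws ! (j - 1) = Inr v" using adj_cases[OF e1] by auto
      obtain v' where v': "ws ! (j + 1) = Inr v'" "(u,v') \<in> ?G" using adj_cases[OF e2] Inl by auto
      have "v < v'" by (rule rights_order[OF sr _ _ v v'(1)]) (use j in auto)
      moreover have "N \<le> v" using a v by (simp add: SA_def)
      ultimately show ?thesis using v' by (simp add: SA_def)
    next
      case (Inr v)
      obtain u' where u': "ws ! (j + 1) = Inl u'" "(u',v) \<in> ?G" using adj_cases[OF e2] Inr by auto
      have "N \<le> v" using a Inr by (simp add: SA_def)
      then have "u' < N" using gc[OF u'(2)] by auto
      then show ?thesis using u' by (simp add: SA_def)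
    qed
  qed
  have stepB: "SB (ws ! (j + 1))" if j: "1 \<le> j" "j + 1 < length ws" and a: "SB (ws ! (j - 1))" "SB (ws ! j)" for j
  proof -
    have e1: "adj ?G (ws ! (j - 1)) (ws ! j)" using adjs[of j] j by simp
    have e2: "adj ?G (ws ! j) (ws ! (j + 1))" using adjs[of "j+1"] j by simp
    show ?thesis
    proof (cases "ws ! j")
      case (Inr v)
      then obtain u where u: "ws ! (j - 1) = Inl u" using adj_cases[OF e1] by auto
      obtain u' where u': "ws ! (j + 1) = Inl u'" "(u',v) \<in> ?G" using adj_cases[OF e2] Inr by auto
      have "u < u'" by (rule lefts_order[OF sl _ _ u u'(1)]) (use j in auto)
      moreover have "N \<le> u" using a u by (simp add: SB_def)
      ultimately show ?thesis using u' by (simp add: SB_def)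
    next
      case (Inl u)
      obtain v' where v': "ws ! (j + 1) = Inr v'" "(u,v') \<in> ?G" using adj_cases[OF e2] Inl by auto
      have "N \<le> u" using a Inl by (simp add: SB_def)
      then have "v' < N" using gc[OF v'(2)] by auto
      then show ?thesis using v' by (simp add: SB_def)
    qed
  qed
  have allA: "SA (ws ! i)" if "SA (ws ! 0)" "SA (ws ! 1)" "i < length ws" for i
    by (rule chain[of "length ws" "\<lambda>i. SA (ws ! i)" 0 i, OF stepA]) (use that in simp_all)
  have allB: "SB (ws ! i)" if "SB (ws ! 0)" "SB (ws ! 1)" "i < length ws" for i
    by (rule chain[of "length ws" "\<lambda>i. SB (ws ! i)" 0 i, OF stepB]) (use that in simp_all)
  have allA1: "SA (ws ! i)" if "SA (ws ! 1)" "SA (ws ! 2)" "1 \<le> i" "i < length ws" for i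
    by (rule chain[of "length ws" "\<lambda>i. SA (ws ! i)" 1 i, OF stepA]) (use that in \<open>simp_all add: numeral_2_eq_2\<close>)
  have allB1: "SB (ws ! i)" if "SB (ws ! 1)" "SB (ws ! 2)" "1 \<le> i" "i < length ws" for i
    by (rule chain[of "length ws" "\<lambda>i. SB (ws ! i)" 1 i, OF stepB]) (use that in \<open>simp_all add: numeral_2_eq_2\<close>)
  have inA: False if all: "\<forall>i<length ws. SA (ws ! i)" and hbA: "has_back_edge ?A ws"
  proof -
    have fpA: "fpE ?A ws" unfolding fpE_def
    proof (intro conjI allI impI)
      fix k assume k: "0 < k \<and> k < length ws"
      have e: "adj ?G (ws ! (k - 1)) (ws ! k)" using adjs k by auto
      have s1: "SA (ws ! (k - 1))" and s2: "SA (ws ! k)" using all k by auto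
      show "adj ?A (ws ! (k - 1)) (ws ! k)"
        using adj_cases[OF e]
      proof
        assume "\<exists>u v. ws ! (k - 1) = Inl u \<and> ws ! k = Inr v \<and> (u, v) \<in> ?G"
        then obtain u v where uv: "ws ! (k - 1) = Inl u" "ws ! k = Inr v" "(u, v) \<in> ?G" by blast
        have "u < N" "N \<le> v" using s1 s2 uv by (auto simp: SA_def)
        then have "(u, v - N) \<in> E" using gc[OF uv(3)] by auto
        then have "(u, v) \<in> ?A" using \<open>N \<le> v\<close> by (force simp: image_iff)
        then show ?thesis using uv by simp
      next
        assume "\<exists>u v. ws ! (k - 1) = Inr v \<and> ws ! k = Inl u \<and> (u, v) \<in> ?G"
        then obtain u v where uv: "ws ! (k - 1) = Inr v" "ws ! k = Inl u" "(u, v) \<in> ?G" by blast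
        have "u < N" "N \<le> v" using s1 s2 uv by (auto simp: SA_def)
        then have "(u, v - N) \<in> E" using gc[OF uv(3)] by auto
        then have "(u, v) \<in> ?A" using \<open>N \<le> v\<close> by (force simp: image_iff)
        then show ?thesis using uv by simp
      qed
    qed (use fp in \<open>auto simp: fpE_def\<close>)
    have rng: "set ws \<subseteq> range (map_sum (\<lambda>u. u) (\<lambda>v. v + N))"
    proof
      fix w assume "w \<in> set ws"
      then obtain i where i: "i < length ws" "ws ! i = w" by (auto simp: in_set_conv_nth)
      have "SA w" using all i by auto
      then show "w \<in> range (map_sum (\<lambda>u. u) (\<lambda>v. v + N))"
      proof (cases w)
        case (Inl u) then show ?thesis by (auto simp: image_iff intro!: exI[of _ "Inl u"])
      next
        case (Inr v)
        then have "N \<le> v" using \<open>SA w\<close> by (simp add: SA_def)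
        then show ?thesis using Inr by (auto simp: image_iff intro!: exI[of _ "Inr (v - N)"])
      qed
    qed
    have "\<not> NB E" by (rule pullback[OF _ _ fpA hbA rng]) (auto simp: strict_mono_def)
    then show False using nb by simp
  qed
  have inB: False if all: "\<forall>i<length ws. SB (ws ! i)" and hbB: "has_back_edge ?B ws"
  proof -
    have fpB: "fpE ?B ws" unfolding fpE_def
    proof (intro conjI allI impI)
      fix k assume k: "0 < k \<and> k < length ws"
      have e: "adj ?G (ws ! (k - 1)) (ws ! k)" using adjs k by auto
      have s1: "SB (ws ! (k - 1))" and s2: "SB (ws ! k)" using all k by auto
      show "adj ?B (ws ! (k - 1)) (ws ! k)"
        using adj_cases[OF e]
      proof
        assume "\<exists>u v. ws ! (k - 1) = Inl u \<and> ws ! k = Inr v \<and> (u, v) \<in> ?G"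
        then obtain u v where uv: "ws ! (k - 1) = Inl u" "ws ! k = Inr v" "(u, v) \<in> ?G" by blast
        have "N \<le> u" "v < N" using s1 s2 uv by (auto simp: SB_def)
        then have "(u - N, v) \<in> E" using gc[OF uv(3)] by auto
        then have "(u, v) \<in> ?B" using \<open>N \<le> u\<close> by (force simp: image_iff)
        then show ?thesis using uv by simp
      next
        assume "\<exists>u v. ws ! (k - 1) = Inr v \<and> ws ! k = Inl u \<and> (u, v) \<in> ?G"
        then obtain u v where uv: "ws ! (k - 1) = Inr v" "ws ! k = Inl u" "(u, v) \<in> ?G" by blast
        have "N \<le> u" "v < N" using s1 s2 uv by (auto simp: SB_def)
        then have "(u - N, v) \<in> E" using gc[OF uv(3)] by auto
        then have "(u, v) \<in> ?B" using \<open>N \<le> u\<close> by (force simp: image_iff)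
        then show ?thesis using uv by simp
      qed
    qed (use fp in \<open>auto simp: fpE_def\<close>)
    have rng: "set ws \<subseteq> range (map_sum (\<lambda>u. u + N) (\<lambda>v. v))"
    proof
      fix w assume "w \<in> set ws"
      then obtain i where i: "i < length ws" "ws ! i = w" by (auto simp: in_set_conv_nth)
      have "SB w" using all i by auto
      then show "w \<in> range (map_sum (\<lambda>u. u + N) (\<lambda>v. v))"
      proof (cases w)
        case (Inr v) then show ?thesis by (auto simp: image_iff intro!: exI[of _ "Inr v"])
      next
        case (Inl u)
        then have "N \<le> u" using \<open>SB w\<close> by (simp add: SB_def)
        then show ?thesis using Inl by (auto simp: image_iff intro!: exI[of _ "Inl (u - N)"])
      qed
    qed
    have "\<not> NB E" by (rule pullback[OF _ _ fpB hbB rng]) (auto simp: strict_mono_def)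
    then show False using nb by simp
  qed
  have e01: "adj ?G (ws ! 0) (ws ! 1)" using adjs[of 1] len by simp
  show False
    using adj_cases[OF e01]
  proof
    assume "\<exists>u v. ws ! 0 = Inl u \<and> ws ! 1 = Inr v \<and> (u, v) \<in> ?G"
    then obtain u0 v1 where w0: "ws ! 0 = Inl u0" and w1: "ws ! 1 = Inr v1" and e: "(u0, v1) \<in> ?G" by blast
    obtain x where x: "(u0, x) \<in> ?G" "v1 < x" "x \<le> Max (set (rights ws))"
      using hb w0 w1 by (auto simp: has_back_edge_def)
    from gc[OF e] consider (a) "u0 < N" "N \<le> v1" | (b) "N \<le> u0" "v1 < N" | (c) "u0 = v1" "u0 < N" by blast
    then show False
    proof cases
      case a
      have "SA (ws ! i)" if "i < length ws" for i
        by (rule allA) (use a w0 w1 that in \<open>auto simp: SA_def\<close>)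
      moreover have "has_back_edge ?A ws"
      proof -
        have "N \<le> x" using a x by simp
        then have "(u0, x - N) \<in> E" using gc[OF x(1)] a by auto
        then have "(u0, x) \<in> ?A" using \<open>N \<le> x\<close> by (force simp: image_iff)
        then show ?thesis using w0 w1 x by (auto simp: has_back_edge_def)
      qed
      ultimately show False using inA by blast
    next
      case b
      have "SB (ws ! i)" if "i < length ws" for i
        by (rule allB) (use b w0 w1 that in \<open>auto simp: SB_def\<close>)
      moreover have "has_back_edge ?B ws"
      proof -
        have "(u0 - N, x) \<in> E" using gc[OF x(1)] b by auto
        then have "(u0, x) \<in> ?B" using b by (force simp: image_iff)
        then show ?thesis using w0 w1 x by (auto simp: has_back_edge_def)
      qed
      ultimately show False using inB by blast
    next
      case c
      have allV: "v < N" if "v \<in> set (rights ws)" for v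
      proof -
        have "Inr v \<in> set ws" using that by (simp add: set_rights)
        then obtain i where i: "i < length ws" "ws ! i = Inr v" by (auto simp: in_set_conv_nth)
        have "i \<noteq> 0"
        proof
          assume "i = 0" with i w0 show False by simp
        qed
        show ?thesis
        proof (cases "i = 1")
          case True then show ?thesis using i w1 c by simp
        next
          case False
          then have i2: "2 \<le> i" using \<open>i \<noteq> 0\<close> by simp
          have e12: "adj ?G (ws ! 1) (ws ! 2)" using adjs[of 2] i i2 by simp
          obtain u2 where u2: "ws ! 2 = Inl u2" "(u2, v1) \<in> ?G" using adj_cases[OF e12] w1 by auto
          have "u0 < u2" by (rule lefts_order[OF sl _ _ w0 u2(1)]) (use i i2 in auto)
          then have Nu2: "N \<le> u2" using gc[OF u2(2)] c by auto
          have "SB (ws ! i)"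
            by (rule allB1) (use Nu2 u2 w1 c i i2 in \<open>auto simp: SB_def\<close>)
          then show ?thesis using i by (simp add: SB_def)
        qed
      qed
      have "v1 \<in> set (rights ws)"
      proof -
        have "1 < length ws" using len by simp
        then have "ws ! 1 \<in> set ws" by (rule nth_mem)
        then have "Inr v1 \<in> set ws" using w1 by simp
        then show ?thesis by (simp add: set_rights)
      qed
      then have "Max (set (rights ws)) \<in> set (rights ws)" by (intro Max_in) auto
      then have "x < N" using allV x(3) by fastforce
      then have "x = u0" using gc[OF x(1)] c by auto
      then show False using x(2) c by simp
    qed
  next
    assume "\<exists>u v. ws ! 0 = Inr v \<and> ws ! 1 = Inl u \<and> (u, v) \<in> ?G"
    then obtain u1 v0 where w0: "ws ! 0 = Inr v0" and w1: "ws ! 1 = Inl u1" and e: "(u1, v0) \<in> ?G" by blast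
    obtain x where x: "(x, v0) \<in> ?G" "u1 < x" "x \<le> Max (set (lefts ws))"
      using hb w0 w1 by (auto simp: has_back_edge_def)
    from gc[OF e] consider (a) "u1 < N" "N \<le> v0" | (b) "N \<le> u1" "v0 < N" | (c) "u1 = v0" "u1 < N" by blast
    then show False
    proof cases
      case a
      have "SA (ws ! i)" if "i < length ws" for i
        by (rule allA) (use a w0 w1 that in \<open>auto simp: SA_def\<close>)
      moreover have "has_back_edge ?A ws"
      proof -
        have "(x, v0 - N) \<in> E" using gc[OF x(1)] a by auto
        then have "(x, v0) \<in> ?A" using a by (force simp: image_iff)
        then show ?thesis using w0 w1 x by (auto simp: has_back_edge_def)
      qed
      ultimately show False using inA by blast
    next
      case b
      have "SB (ws ! i)" if "i < length ws" for i
        by (rule allB) (use b w0 w1 that in \<open>auto simp: SB_def\<close>)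
      moreover have "has_back_edge ?B ws"
      proof -
        have "N \<le> x" using b x by simp
        then have "(x - N, v0) \<in> E" using gc[OF x(1)] b by auto
        then have "(x, v0) \<in> ?B" using \<open>N \<le> x\<close> by (force simp: image_iff)
        then show ?thesis using w0 w1 x by (auto simp: has_back_edge_def)
      qed
      ultimately show False using inB by blast
    next
      case c
      have allU: "u < N" if "u \<in> set (lefts ws)" for u
      proof -
        have "Inl u \<in> set ws" using that by (simp add: set_lefts)
        then obtain i where i: "i < length ws" "ws ! i = Inl u" by (auto simp: in_set_conv_nth)
        have "i \<noteq> 0"
        proof
          assume "i = 0" with i w0 show False by simp
        qed
        show ?thesis
        proof (cases "i = 1")
          case True then show ?thesis using i w1 c by simp
        next
          case False
          then have i2: "2 \<le> i" using \<open>i \<noteq> 0\<close> by simp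
          have e12: "adj ?G (ws ! 1) (ws ! 2)" using adjs[of 2] i i2 by simp
          obtain v2 where v2: "ws ! 2 = Inr v2" "(u1, v2) \<in> ?G" using adj_cases[OF e12] w1 by auto
          have "v0 < v2" by (rule rights_order[OF sr _ _ w0 v2(1)]) (use i i2 in auto)
          then have Nv2: "N \<le> v2" using gc[OF v2(2)] c by auto
          have "SA (ws ! i)"
            by (rule allA1) (use Nv2 v2 w1 c i i2 in \<open>auto simp: SA_def\<close>)
          then show ?thesis using i by (simp add: SA_def)
        qed
      qed
      have "u1 \<in> set (lefts ws)"
      proof -
        have "1 < length ws" using len by simp
        then have "ws ! 1 \<in> set ws" by (rule nth_mem)
        then have "Inl u1 \<in> set ws" using w1 by simp
        then show ?thesis by (simp add: set_lefts)
      qed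
      then have "Max (set (lefts ws)) \<in> set (lefts ws)" by (intro Max_in) auto
      then have "x < N" using allU x(3) by fastforce
      then have "x = v0" using gc[OF x(1)] c by auto
      then show False using x(2) c by simp
    qed
  qed
qed

fun Ek :: "nat \<Rightarrow> (nat \<times> nat) set" where
  "Ek 0 = {(0,0)}"
| "Ek (Suc k) = glue (2^k) (Ek k)"

lemma glue_sub: "E \<subseteq> {..<N} \<times> {..<N} \<Longrightarrow> glue N E \<subseteq> {..<2*N} \<times> {..<2*N}"
  unfolding glue_def by auto

lemma Ek_sub: "Ek k \<subseteq> {..<2^k} \<times> {..<2^k}"
proof (induction k)
  case 0 then show ?case by simp
next
  case (Suc k)
  then show ?case using glue_sub[OF Suc.IH] by simp
qed

lemma NB_base: "NB {(0,0)}"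
  unfolding NB_def has_back_edge_def by (auto split: sum.splits)

lemma NB_Ek: "NB (Ek k)"
proof (induction k)
  case 0 then show ?case using NB_base by simp
next
  case (Suc k)
  then show ?case using NB_glue[OF Ek_sub Suc.IH] by simp
qed

lemma card_glue:
  assumes sub: "E \<subseteq> {..<N} \<times> {..<N}"
  shows "card (glue N E) = 2 * card E + N"
proof -
  have finE: "finite E" using sub by (rule finite_subset) auto
  let ?A = "(\<lambda>(u,v). (u, v + N)) ` E" and ?B = "(\<lambda>(u,v). (u + N, v)) ` E"
    and ?D = "(\<lambda>u. (u,u)) ` {..<N}"
  have cA: "card ?A = card E" by (rule card_image) (auto simp: inj_on_def)
  have cB: "card ?B = card E" by (rule card_image) (auto simp: inj_on_def)
  have cD: "card ?D = N" by (subst card_image) (auto simp: inj_on_def)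
  have d1: "?A \<inter> ?B = {}" using sub by auto
  have d2: "(?A \<union> ?B) \<inter> ?D = {}" using sub by auto
  have "card (?A \<union> ?B \<union> ?D) = card (?A \<union> ?B) + card ?D"
    by (rule card_Un_disjoint) (use finE d2 in auto)
  also have "card (?A \<union> ?B) = card ?A + card ?B"
    by (rule card_Un_disjoint) (use finE d1 in auto)
  finally show ?thesis unfolding glue_def using cA cB cD by simp
qed

lemma card_Ek: "2 * card (Ek k) = 2^k * (k + 2)"
proof (induction k)
  case 0 then show ?case by simp
next
  case (Suc k)
  have "2 * card (Ek (Suc k)) = 2 * (2 * card (Ek k) + 2^k)"
    using card_glue[OF Ek_sub[of k]] by simp
  also have "\<dots> = 2^(Suc k) * (Suc k + 2)" using Suc.IH by (simp add: algebra_simps)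
  finally show ?case .
qed

lemma lower:
  assumes n2: "(n::nat) \<ge> 2"
  shows "\<exists>U V E. prbg U V E \<and> card U + card V = n \<and> real (card E) \<ge> 1/8 * real n * ln (real n)"
proof -
  define K where "K = floor_log n"
  have npos: "n > 0" using n2 by simp
  have K1: "K \<ge> 1" using n2 unfolding K_def by (metis floor_log_le_iff floor_log_power power_one_right)
  have lo: "2 ^ K \<le> n" using floor_log_exp2_le[OF npos] by (simp add: K_def)
  have hi: "n < 2 * 2 ^ K" using floor_log_exp2_gt[of n] by (simp add: K_def)
  define k where "k = K - 1"
  define N :: nat where "N = 2 ^ k"
  have KN: "2 ^ K = 2 * N" using K1 by (simp add: N_def k_def power_Suc[symmetric])
  define U where "U = {..<N}"
  define V where "V = {..<n - N}"
  have cU: "card U + card V = n" using lo KN by (simp add: U_def V_def)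
  have s1: "Ek k \<subseteq> {..<N} \<times> {..<N}" using Ek_sub[of k] by (simp add: N_def)
  have NN: "N \<le> n - N" using lo KN by simp
  have sub: "Ek k \<subseteq> U \<times> V"
  proof
    fix p assume "p \<in> Ek k"
    then have "fst p < N" "snd p < N" using s1 by auto
    then show "p \<in> U \<times> V" using NN by (cases p) (auto simp: U_def V_def)
  qed
  have pr: "prbg U V (Ek k)" by (rule prbgI[OF _ _ sub NB_Ek]) (simp_all add: U_def V_def)
  have ce: "2 * real (card (Ek k)) = real N * (real K + 1)"
  proof -
    have "2 * card (Ek k) = N * (K + 1)" using card_Ek[of k] K1 by (simp add: N_def k_def)
    then show ?thesis by (metis of_nat_1 of_nat_add of_nat_mult of_nat_numeral)
  qed
  have n4: "real n \<le> 4 * real N" using hi KN by simp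
  have hr: "real n < real (2 * 2 ^ K)" using hi by (simp only: of_nat_less_iff)
  have "ln (real n) < ln (real (2 * 2 ^ K))" by (rule ln_strict_mono) (use hr npos in auto)
  also have "real (2 * 2 ^ K) = 2 ^ (K + 1)" by simp
  also have "ln ((2::real) ^ (K + 1)) = real (K + 1) * ln 2" by (rule ln_realpow)
  finally have "ln (real n) < real (K + 1) * ln 2" .
  also have "\<dots> \<le> real (K + 1)" using ln_2_less_1 by simp
  finally have lnb: "ln (real n) \<le> real K + 1" by simp
  have lnpos: "0 \<le> ln (real n)" using n2 by simp
  have "real n * ln (real n) \<le> (4 * real N) * (real K + 1)"
    by (rule mult_mono[OF n4 lnb]) (use lnpos in auto)
  then have "1/8 * real n * ln (real n) \<le> real (card (Ek k))" using ce by simp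
  then show ?thesis using pr cU by blast
qed

theorem theorem4p2:
  shows "(\<exists>C::real. \<forall>U V E. prbg U V E \<and> card U + card V \<ge> 2 \<longrightarrow>
            real (card E) \<le> real (card U + card V) * log 2 (real (card U + card V))
                             + C * real (card U + card V))
       \<and> (\<exists>c::real. c > 0 \<and> (\<forall>n::nat. n \<ge> 2 \<longrightarrow>
            (\<exists>U V E. prbg U V E \<and> card U + card V = n \<and>
                     real (card E) \<ge> c * real n * ln (real n))))"
proof (rule conjI)
  show "\<exists>C::real. \<forall>U V E. prbg U V E \<and> card U + card V \<ge> 2 \<longrightarrow>
            real (card E) \<le> real (card U + card V) * log 2 (real (card U + card V))
                             + C * real (card U + card V)"
  proof (rule exI[of _ 2], intro allI impI)
    fix U V E assume "prbg U V E \<and> card U + card V \<ge> 2"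
    then show "real (card E) \<le> real (card U + card V) * log 2 (real (card U + card V))
                             + 2 * real (card U + card V)"
      using upper_real by blast
  qed
  show "\<exists>c::real. c > 0 \<and> (\<forall>n::nat. n \<ge> 2 \<longrightarrow>
            (\<exists>U V E. prbg U V E \<and> card U + card V = n \<and>
                     real (card E) \<ge> c * real n * ln (real n)))"
    by (rule exI[of _ "1/8"]) (use lower in auto)
qed

end
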